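(* Let $J$ be an ordinal, anonymous and neutral randomized mechanism for the unit-range normalization with $n$ agents and $n$ items, and let $\epsilon>0$. Then $$ar(J) = \inf_{\mathbf u\in C_\epsilon^n} \frac{\mathbb E[\sum_{i=1}^n u_i(J(\mathbf u)_i)]}{w^*(\mathbf u)}.$$
   Context: Agents $N=\{1,\dots,n\}$, items $M=\{1,\dots,n\}$, outcomes are bijections $\mu$ ($O$ the set of outcomes). Unit-range valuation functions: injective $u:M\to\mathbb R$ with $\max_j u(j)=1$ and $\min_j u(j)=0$; $V$ is the set of these, $V^n$ the set of profiles. A randomized mechanism $J$ maps each profile to a distribution over $O$. $J$ is ordinal if its output distribution is unchanged when one agent's valuation function is replaced by another inducing the same ordering of items. $J$ is anonymous if for every permutation $\pi$ of agents, with $\mathbf u^\pi=(u_{\pi(1)},\dots,u_{\pi(n)})$, $(J(\mathbf u^\pi)_k)_k$ has the same distribution as $(J(\mathbf u)_{\pi(k)})_k$. $J$ is neutral if for every permutation $\sigma$ of items, with $\mathbf u\circ\sigma=(u_1\circ\sigma,\dots,u_n\circ\sigma)$, $(\sigma(J(\mathbf u\circ\sigma)_i))_i$ has the same distribution as $(J(\mathbf u)_i)_i$. $w^*(\mathbf u)=\max_{\mu\in O}\sum_i u_i(\mu_i)$, and $ar(J)=\inf_{\mathbf u\in V^n}\mathbb E[\sum_i u_i(J(\mathbf u)_i)]/w^*(\mathbf u)$. The quasi-combinatorial valuation functions are $C_\epsilon=\{u\in V : u(M)\subseteq[0,\epsilon)\cup(1-\epsilon,1]\}$, and $C_\epsilon^n$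 is the set of profiles all of whose valuation functions lie in $C_\epsilon$. *)

theory Defs
  imports "HOL-Probability.Probability"
begin

text \<open>Agents and items are both indexed by a finite type 'n (so there are n = CARD('n)
 agents and n items). An outcome is a bijection mu :: 'n => 'n (agent i receives item mu i).
 A profile is a function u :: 'n => 'n => real, u i being agent i's valuation function.
 A randomized mechanism is a map from profiles to probability mass functions over
 functions 'n => 'n; it is only constrained on profiles in V^n.\<close>

definition outcomes :: "('n::finite \<Rightarrow> 'n) set" where
  "outcomes = {\<mu>. bij \<mu>}"

definition unit_range :: "('n::finite \<Rightarrow> real) set" where
  "unit_range = {u. inj u \<and> Max (range u) = 1 \<and> Min (range u) = 0}"

definition profiles :: "('n::finite \<Rightarrow> 'n \<Rightarrow> real) set" where
  "profiles = {u. \<forall>i. u i \<in> unit_range}"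

definition quasi_comb :: "real \<Rightarrow> ('n::finite \<Rightarrow> real) set" where
  "quasi_comb \<epsilon> = {u \<in> unit_range. \<forall>j. u j \<in> {0..<\<epsilon>} \<union> {1 - \<epsilon><..1}}"

definition quasi_comb_profiles :: "real \<Rightarrow> ('n::finite \<Rightarrow> 'n \<Rightarrow> real) set" where
  "quasi_comb_profiles \<epsilon> = {u. \<forall>i. u i \<in> quasi_comb \<epsilon>}"

definition welfare :: "('n::finite \<Rightarrow> 'n \<Rightarrow> real) \<Rightarrow> ('n \<Rightarrow> 'n) \<Rightarrow> real" where
  "welfare u \<mu> = (\<Sum>i\<in>UNIV. u i (\<mu> i))"

definition opt_welfare :: "('n::finite \<Rightarrow> 'n \<Rightarrow> real) \<Rightarrow> real" where
  "opt_welfare u = Max (welfare u ` outcomes)"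

type_synonym 'n mechanism = "('n \<Rightarrow> 'n \<Rightarrow> real) \<Rightarrow> ('n \<Rightarrow> 'n) pmf"

definition is_mechanism :: "'n::finite mechanism \<Rightarrow> bool" where
  "is_mechanism J \<longleftrightarrow> (\<forall>u\<in>profiles. set_pmf (J u) \<subseteq> outcomes)"

definition same_order :: "('n \<Rightarrow> real) \<Rightarrow> ('n \<Rightarrow> real) \<Rightarrow> bool" where
  "same_order v w \<longleftrightarrow> (\<forall>a b. v a < v b \<longleftrightarrow> w a < w b)"

definition ordinal :: "'n::finite mechanism \<Rightarrow> bool" where
  "ordinal J \<longleftrightarrow> (\<forall>u\<in>profiles. \<forall>i. \<forall>v\<in>unit_range.
      same_order (u i) v \<longrightarrow> J (u(i := v)) = J u)"

definition anonymous :: "'n::finite mechanism \<Rightarrow> bool" where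
  "anonymous J \<longleftrightarrow> (\<forall>u\<in>profiles. \<forall>\<pi>. bij \<pi> \<longrightarrow>
      J (\<lambda>k. u (\<pi> k)) = map_pmf (\<lambda>\<mu>. \<lambda>k. \<mu> (\<pi> k)) (J u))"

definition neutral :: "'n::finite mechanism \<Rightarrow> bool" where
  "neutral J \<longleftrightarrow> (\<forall>u\<in>profiles. \<forall>\<sigma>. bij \<sigma> \<longrightarrow>
      map_pmf (\<lambda>\<mu>. \<lambda>i. \<sigma> (\<mu> i)) (J (\<lambda>i. u i \<circ> \<sigma>)) = J u)"

definition exp_welfare :: "'n::finite mechanism \<Rightarrow> ('n \<Rightarrow> 'n \<Rightarrow> real) \<Rightarrow> real" where
  "exp_welfare J u = measure_pmf.expectation (J u) (welfare u)"

definition approx_ratio :: "'n::finite mechanism \<Rightarrow> real" where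
  "approx_ratio J = (INF u\<in>profiles. exp_welfare J u / opt_welfare u)"

end

theory Submission
  imports Defs "HOL-Combinatorics.Transposition"
begin

lemma qc_step:
  fixes Fx Fy Fz Gx Gy Gz c :: real
  assumes "Gx > 0" "Gy > 0" "Gz > 0" "Fy \<ge> 0" "Fz \<ge> 0"
    "Fx = c*Fz + (1-c)*Fy" "Gx \<le> c*Gz + (1-c)*Gy" "0 \<le> c" "c \<le> 1"
  shows "min (Fz/Gz) (Fy/Gy) \<le> Fx/Gx"
proof -
  define t where "t = min (Fz/Gz) (Fy/Gy)"
  have t0: "t \<ge> 0" using assms by (simp add: t_def)
  have "t \<le> Fz/Gz" by (simp add: t_def)
  hence 1: "t*Gz \<le> Fz" using assms by (simp add: pos_le_divide_eq)
  have "t \<le> Fy/Gy" by (simp add: t_def)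
  hence 2: "t*Gy \<le> Fy" using assms by (simp add: pos_le_divide_eq)
  have "t*Gx \<le> t*(c*Gz + (1-c)*Gy)" using assms t0 by (simp add: mult_left_mono)
  also have "\<dots> = c*(t*Gz) + (1-c)*(t*Gy)" by (simp add: algebra_simps)
  also have "\<dots> \<le> c*Fz + (1-c)*Fy"
    using 1 2 assms by (intro add_mono mult_left_mono) auto
  finally have "t*Gx \<le> Fx" using assms by simp
  thus ?thesis using assms by (simp add: t_def pos_le_divide_eq)
qed

lemma reduce:
  fixes F G :: "('n::finite \<Rightarrow> real) \<Rightarrow> real" and a :: "'n \<Rightarrow> real"
  assumes hF: "\<And>x y z c. (\<And>j. x j = c*z j + (1-c)*y j) \<Longrightarrow> F x = c*F z + (1-c)*F y"
   and hG: "\<And>x y z c. (\<And>j. x j = c*z j + (1-c)*y j) \<Longrightarrow> 0\<le>c \<Longrightarrow> c\<le>1 \<Longrightarrow> G x \<le> c*G z + (1-c)*G y"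
   and pos: "\<And>x. (\<And>j. 0 \<le> x j \<and> x j \<le> 1) \<Longrightarrow> G x > 0 \<and> F x \<ge> 0"
  shows "card {j. 0 < x j \<and> x j < 1} = n \<Longrightarrow> (\<forall>j. 0 \<le> x j \<and> x j \<le> 1) \<Longrightarrow>
    (\<forall>j j'. a j < a j' \<longrightarrow> x j \<le> x j') \<Longrightarrow> (\<exists>j. x j = 0) \<Longrightarrow> (\<exists>j. x j = 1) \<Longrightarrow>
    \<exists>U. (\<forall>j j'. a j < a j' \<longrightarrow> j \<in> U \<longrightarrow> j' \<in> U) \<and> U \<noteq> {} \<and> U \<noteq> UNIV \<and>
      F (\<lambda>j. if j\<in>U then 1 else 0) / G (\<lambda>j. if j\<in>U then 1 else 0) \<le> F x / G x"
proof (induction n arbitrary: x rule: less_induct)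
  case (less n)
  let ?M = "{j. 0 < x j \<and> x j < 1}"
  show ?case
  proof (cases "?M = {}")
    case True
    define U where "U = {j. x j = 1}"
    have xe: "x = (\<lambda>j. if j\<in>U then 1 else 0)"
    proof
      fix j
      have "\<not>(0<x j \<and> x j<1)" using True by blast
      hence "x j = 0 \<or> x j = 1" using less.prems(2)[rule_format, of j] by linarith
      thus "x j = (if j\<in>U then 1 else 0)" unfolding U_def by auto
    qed
    have up: "\<forall>j j'. a j < a j' \<longrightarrow> j \<in> U \<longrightarrow> j' \<in> U"
    proof (intro allI impI)
      fix j j' assume "a j < a j'" "j \<in> U"
      hence "x j \<le> x j'" "x j = 1" using less.prems(3) unfolding U_def by blast+
      thus "j' \<in> U" using less.prems(2)[rule_format, of j'] unfolding U_def by auto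
    qed
    have ne: "U \<noteq> {}" using less.prems(5) unfolding U_def by auto
    have nu: "U \<noteq> UNIV"
    proof
      assume "U = UNIV"
      obtain j where "x j = 0" using less.prems(4) by auto
      moreover have "j \<in> U" using \<open>U = UNIV\<close> by auto
      ultimately show False unfolding U_def by auto
    qed
    show ?thesis using up ne nu xe by (intro exI[of _ U]) auto
  next
    case False
    define c where "c = Min (x ` ?M)"
    have fin: "finite ?M" by simp
    have cM: "c \<in> x ` ?M" using False fin unfolding c_def by (intro Min_in) auto
    have c01: "0 < c" "c < 1" using cM by auto
    have cmin: "\<And>j. j \<in> ?M \<Longrightarrow> c \<le> x j" unfolding c_def using fin by simp
    define z where "z = (\<lambda>j. if c \<le> x j then 1 else (0::real))"
    define y where "y = (\<lambda>j. if c \<le> x j then (x j - c)/(1-c) else 0)"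
    have comb: "x j = c*z j + (1-c)*y j" for j
    proof (cases "c \<le> x j")
      case True thus ?thesis using c01 by (simp add: z_def y_def)
    next
      case F: False
      have "\<not> (0 < x j)"
      proof
        assume "0 < x j"
        hence "j \<in> ?M" using F c01 by auto
        thus False using cmin[of j] F by auto
      qed
      hence "x j = 0" using less.prems(2)[rule_format, of j] by linarith
      thus ?thesis using F by (simp add: z_def y_def)
    qed
    have Mz: "{j. 0 < z j \<and> z j < 1} = {}" by (auto simp: z_def)
    have My: "{j. 0 < y j \<and> y j < 1} \<subset> ?M"
    proof
      show "{j. 0 < y j \<and> y j < 1} \<subseteq> ?M"
      proof
        fix j assume j: "j \<in> {j. 0 < y j \<and> y j < 1}"
        hence cj: "c \<le> x j" by (auto simp: y_def split: if_splits)
        hence "0 < (x j - c)/(1-c)" "(x j - c)/(1-c) < 1" using j by (auto simp: y_def)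
        hence "x j < 1" using c01 by (simp add: divide_simps)
        thus "j \<in> ?M" using cj c01 by auto
      qed
      obtain j0 where "j0 \<in> ?M" "x j0 = c" using cM by auto
      moreover have "y j0 = 0" using \<open>x j0 = c\<close> by (simp add: y_def)
      ultimately show "{j. 0 < y j \<and> y j < 1} \<noteq> ?M"
        by (metis (mono_tags, lifting) less_irrefl mem_Collect_eq)
    qed
    have "card ?M > 0" using False fin by (simp only: card_gt_0_iff) blast
    hence nM: "0 < n" using less.prems(1) by simp
    have cy: "card {j. 0 < y j \<and> y j < 1} < n"
      using psubset_card_mono[OF fin My] less.prems(1) by simp
    have z01: "\<forall>j. 0 \<le> z j \<and> z j \<le> 1" by (simp add: z_def)
    have y01: "\<forall>j. 0 \<le> y j \<and> y j \<le> 1"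
    proof
      fix j
      have xj: "0 \<le> x j" "x j \<le> 1" using less.prems(2) by auto
      show "0 \<le> y j \<and> y j \<le> 1"
      proof (cases "c \<le> x j")
        case True
        have "0 \<le> (x j - c)/(1-c)" using True c01 by simp
        moreover have "(x j - c)/(1-c) \<le> 1" using xj c01 by (simp add: pos_divide_le_eq)
        ultimately show ?thesis using True by (simp add: y_def)
      qed (simp add: y_def)
    qed
    have zm: "\<forall>j j'. a j < a j' \<longrightarrow> z j \<le> z j'"
    proof (intro allI impI)
      fix j j' assume "a j < a j'"
      hence "x j \<le> x j'" using less.prems(3) by blast
      thus "z j \<le> z j'" by (auto simp: z_def)
    qed
    have ym: "\<forall>j j'. a j < a j' \<longrightarrow> y j \<le> y j'"
    proof (intro allI impI)
      fix j j' assume "a j < a j'"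
      hence xx: "x j \<le> x j'" using less.prems(3) by auto
      show "y j \<le> y j'"
      proof (cases "c \<le> x j")
        case True
        hence "c \<le> x j'" using xx by linarith
        thus ?thesis using True xx c01 unfolding y_def by (simp add: divide_right_mono)
      next
        case False
        thus ?thesis using y01 unfolding y_def by auto
      qed
    qed
    obtain j1 where j1: "x j1 = 1" using less.prems(5) by auto
    obtain j0 where j0: "x j0 = 0" using less.prems(4) by auto
    have "z j0 = 0" using j0 c01 by (simp add: z_def)
    hence z0: "\<exists>j. z j = 0" by blast
    have "z j1 = 1" using j1 c01 by (simp add: z_def)
    hence z1: "\<exists>j. z j = 1" by blast
    have "y j0 = 0" using j0 c01 by (simp add: y_def)
    hence y0: "\<exists>j. y j = 0" by blast
    have "y j1 = 1" using j1 c01 by (simp add: y_def)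
    hence y1: "\<exists>j. y j = 1" by blast
    obtain Uz where Uz: "(\<forall>j j'. a j < a j' \<longrightarrow> j \<in> Uz \<longrightarrow> j' \<in> Uz)" "Uz \<noteq> {}" "Uz \<noteq> UNIV"
      "F (\<lambda>j. if j\<in>Uz then 1 else 0) / G (\<lambda>j. if j\<in>Uz then 1 else 0) \<le> F z / G z"
      using less.IH[of 0 z] nM Mz z01 zm z0 z1 by auto
    obtain Uy where Uy: "(\<forall>j j'. a j < a j' \<longrightarrow> j \<in> Uy \<longrightarrow> j' \<in> Uy)" "Uy \<noteq> {}" "Uy \<noteq> UNIV"
      "F (\<lambda>j. if j\<in>Uy then 1 else 0) / G (\<lambda>j. if j\<in>Uy then 1 else 0) \<le> F y / G y"
      using less.IH[OF cy refl] y01 ym y0 y1 by blast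
    have px: "G x > 0 \<and> F x \<ge> 0" using less.prems(2) by (intro pos) blast
    have pz: "G z > 0 \<and> F z \<ge> 0" using z01 by (intro pos) blast
    have py: "G y > 0 \<and> F y \<ge> 0" using y01 by (intro pos) blast
    have eF: "F x = c*F z + (1-c)*F y" by (rule hF) (rule comb)
    have eG: "G x \<le> c*G z + (1-c)*G y" by (rule hG) (use comb c01 in auto)
    have "min (F z / G z) (F y / G y) \<le> F x / G x"
      by (rule qc_step[where c=c]) (use px pz py eF eG c01 in auto)
    thus ?thesis
    proof (cases "F z / G z \<le> F y / G y")
      case True thus ?thesis using Uz \<open>min _ _ \<le> _\<close> by (intro exI[of _ Uz]) auto
    next
      case False thus ?thesis using Uy \<open>min _ _ \<le> _\<close> by (intro exI[of _ Uy]) auto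
    qed
  qed
qed


lemma unit_range_props:
  assumes "v \<in> unit_range"
  shows "(\<forall>j. 0 \<le> v j \<and> v j \<le> 1) \<and> (\<exists>j. v j = 1) \<and> (\<exists>j. v j = 0) \<and> inj v"
proof -
  have mx: "Max (range v) = 1" and mn: "Min (range v) = 0" and inj: "inj v"
    using assms by (auto simp: unit_range_def)
  have f: "finite (range v)" by simp
  have "\<forall>j. 0 \<le> v j \<and> v j \<le> 1"
  proof
    fix j
    have "v j \<le> Max (range v)" using f by (intro Max_ge) auto
    moreover have "Min (range v) \<le> v j" using f by (intro Min_le) auto
    ultimately show "0 \<le> v j \<and> v j \<le> 1" using mx mn by simp
  qed
  moreover have "Max (range v) \<in> range v" using f by (intro Max_in) auto
  hence "\<exists>j. v j = 1" using mx by auto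
  moreover have "Min (range v) \<in> range v" using f by (intro Min_in) auto
  hence "\<exists>j. v j = 0" using mn by auto
  ultimately show ?thesis using inj by blast
qed

lemma welfare_upd:
  "welfare (u(i:=x)) \<mu> = (\<Sum>k\<in>UNIV-{i}. u k (\<mu> k)) + x (\<mu> i)"
proof -
  have "welfare (u(i:=x)) \<mu> = (u(i:=x)) i (\<mu> i) + (\<Sum>k\<in>UNIV-{i}. (u(i:=x)) k (\<mu> k))"
    unfolding welfare_def by (rule sum.remove) auto
  also have "(\<Sum>k\<in>UNIV-{i}. (u(i:=x)) k (\<mu> k)) = (\<Sum>k\<in>UNIV-{i}. u k (\<mu> k))"
    by (rule sum.cong) auto
  finally show ?thesis by (simp only: fun_upd_same add.commute)
qed

lemma welfare_comb:
  assumes "\<And>j. X j = c * Z j + (1-c) * Y j"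
  shows "welfare (u(i:=X)) \<mu> = c * welfare (u(i:=Z)) \<mu> + (1-c) * welfare (u(i:=Y)) \<mu>"
  unfolding welfare_upd assms by (simp add: algebra_simps)

lemma outcomes_fin: "finite (outcomes :: ('n::finite \<Rightarrow> 'n) set)"
  by (rule finite_subset[OF subset_UNIV]) simp

lemma outcomes_id: "id \<in> outcomes"
  by (simp add: outcomes_def)

lemma opt_ge: "\<mu> \<in> outcomes \<Longrightarrow> welfare u \<mu> \<le> opt_welfare u"
  unfolding opt_welfare_def using outcomes_fin by (intro Max_ge) auto

lemma opt_attained: "\<exists>\<mu>\<in>outcomes. opt_welfare u = welfare u \<mu>"
proof -
  have "opt_welfare u \<in> welfare u ` outcomes"
    unfolding opt_welfare_def using outcomes_fin outcomes_id by (intro Max_in) auto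
  thus ?thesis by auto
qed

lemma opt_comb:
  assumes "\<And>j. X j = c * Z j + (1-c) * Y j" "0 \<le> c" "c \<le> 1"
  shows "opt_welfare (u(i:=X)) \<le> c * opt_welfare (u(i:=Z)) + (1-c) * opt_welfare (u(i:=Y))"
proof -
  obtain \<mu> where m: "\<mu> \<in> outcomes" "opt_welfare (u(i:=X)) = welfare (u(i:=X)) \<mu>"
    using opt_attained by blast
  have "welfare (u(i:=X)) \<mu> = c * welfare (u(i:=Z)) \<mu> + (1-c) * welfare (u(i:=Y)) \<mu>"
    by (rule welfare_comb) (rule assms)
  also have "\<dots> \<le> c * opt_welfare (u(i:=Z)) + (1-c) * opt_welfare (u(i:=Y))"
    using assms m by (intro add_mono mult_left_mono opt_ge) auto
  finally show ?thesis using m by simp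
qed

lemma welfare_nonneg: "(\<And>k j. 0 \<le> v k j) \<Longrightarrow> 0 \<le> welfare v \<mu>"
  unfolding welfare_def by (intro sum_nonneg) auto

lemma opt_pos:
  assumes "\<And>k j. 0 \<le> v k j" "v i jt > 0"
  shows "opt_welfare v > 0"
proof -
  let ?m = "Transposition.transpose i jt"
  have "?m \<in> outcomes" by (simp add: outcomes_def)
  hence "welfare v ?m \<le> opt_welfare v" by (rule opt_ge)
  moreover have "v i (?m i) \<le> welfare v ?m"
    unfolding welfare_def using assms by (intro member_le_sum) auto
  ultimately show ?thesis using assms by simp
qed

lemma exp_nonneg: "(\<And>k j. 0 \<le> v k j) \<Longrightarrow> 0 \<le> exp_welfare J v"
  unfolding exp_welfare_def by (intro Bochner_Integration.integral_nonneg welfare_nonneg) auto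

lemma profile_nonneg: "u \<in> profiles \<Longrightarrow> 0 \<le> u k j"
  unfolding profiles_def using unit_range_props by blast

lemma ratio_nonneg: "u \<in> profiles \<Longrightarrow> 0 \<le> exp_welfare J u / opt_welfare u"
proof -
  assume u: "u \<in> profiles"
  have "0 \<le> exp_welfare J u" using profile_nonneg[OF u] by (intro exp_nonneg)
  moreover have "welfare u id \<le> opt_welfare u" using outcomes_id by (rule opt_ge)
  moreover have "0 \<le> welfare u id" using profile_nonneg[OF u] by (intro welfare_nonneg)
  ultimately show ?thesis by simp
qed


lemma step:
  fixes J :: "'n::finite mechanism"
  assumes ord: "ordinal J" and u: "u \<in> profiles" and eps: "\<epsilon> > 0"
  shows "\<exists>w\<in>quasi_comb \<epsilon>. u(i:=w) \<in> profiles \<and>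
     exp_welfare J (u(i:=w)) / opt_welfare (u(i:=w)) \<le> exp_welfare J u / opt_welfare u"
proof -
  define a where "a = u i"
  have aU: "a \<in> unit_range" using u unfolding a_def profiles_def by auto
  note ap = unit_range_props[OF aU]
  obtain jt where jt: "a jt = 1" using ap by blast
  obtain jb where jb: "a jb = 0" using ap by blast
  have ainj: "inj a" using ap by blast
  define \<eta> :: real where "\<eta> = min (\<epsilon>/2) (1/2)"
  have eta: "0 < \<eta>" "\<eta> < \<epsilon>" "\<eta> \<le> 1/2" using eps by (auto simp: \<eta>_def)
  define T where "T = (\<lambda>x::'n\<Rightarrow>real. \<lambda>j. (1-\<eta>) * x j + \<eta> * a j)"
  define F where "F = (\<lambda>x. measure_pmf.expectation (J u) (\<lambda>\<mu>. welfare (u(i:=T x)) \<mu>))"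
  define G where "G = (\<lambda>x. opt_welfare (u(i:=T x)))"
  have Tcomb: "T x j = c * T z j + (1-c) * T y j" if "\<And>j. x j = c*z j + (1-c)*y j" for x y z c j
    unfolding T_def that by (simp add: algebra_simps)
  have hF: "F x = c*F z + (1-c)*F y" if "\<And>j. x j = c*z j + (1-c)*y j" for x y z c
  proof -
    have int: "integrable (measure_pmf (J u)) f" for f :: "('n\<Rightarrow>'n) \<Rightarrow> real"
      by (rule integrable_measure_pmf_finite) (rule finite_subset[OF subset_UNIV], simp)
    have "F x = measure_pmf.expectation (J u)
        (\<lambda>\<mu>. c * welfare (u(i:=T z)) \<mu> + (1-c) * welfare (u(i:=T y)) \<mu>)"
      unfolding F_def by (intro Bochner_Integration.integral_cong refl welfare_comb Tcomb that)
    also have "\<dots> = c*F z + (1-c)*F y"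
      unfolding F_def by (simp add: int)
    finally show ?thesis .
  qed
  have hG: "G x \<le> c*G z + (1-c)*G y" if "\<And>j. x j = c*z j + (1-c)*y j" "0\<le>c" "c\<le>1" for x y z c
    unfolding G_def by (intro opt_comb Tcomb that)
  have Tnn: "\<And>k j. 0 \<le> (u(i:=T x)) k j" if "\<And>j. 0 \<le> x j \<and> x j \<le> 1" for x
  proof -
    fix k j
    show "0 \<le> (u(i:=T x)) k j"
    proof (cases "k = i")
      case True
      have "0 \<le> x j" "0 \<le> a j" using that ap by auto
      thus ?thesis using True eta unfolding T_def by simp
    next
      case False thus ?thesis using profile_nonneg[OF u] by simp
    qed
  qed
  have pos: "G x > 0 \<and> F x \<ge> 0" if x01: "\<And>j. 0 \<le> x j \<and> x j \<le> 1" for x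
  proof
    have "(u(i:=T x)) i jt > 0"
    proof -
      have "0 \<le> x jt" using x01 by auto
      hence "0 \<le> (1-\<eta>) * x jt" using eta by simp
      thus ?thesis using jt eta unfolding T_def by simp
    qed
    thus "G x > 0" unfolding G_def by (intro opt_pos[where i=i and jt=jt] Tnn x01)
    show "F x \<ge> 0" unfolding F_def
      by (intro Bochner_Integration.integral_nonneg welfare_nonneg Tnn x01)
  qed
  have "\<exists>U. (\<forall>j j'. a j < a j' \<longrightarrow> j \<in> U \<longrightarrow> j' \<in> U) \<and> U \<noteq> {} \<and> U \<noteq> UNIV \<and>
      F (\<lambda>j. if j\<in>U then 1 else 0) / G (\<lambda>j. if j\<in>U then 1 else 0) \<le> F a / G a"
    by (rule reduce[where F=F and G=G, OF hF hG pos refl]) (use ap in auto)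
  then obtain U where U: "\<forall>j j'. a j < a j' \<longrightarrow> j \<in> U \<longrightarrow> j' \<in> U" "U \<noteq> {}" "U \<noteq> UNIV"
    "F (\<lambda>j. if j\<in>U then 1 else 0) / G (\<lambda>j. if j\<in>U then 1 else 0) \<le> F a / G a"
    by blast
  define ind where "ind = (\<lambda>j. if j\<in>U then 1 else (0::real))"
  define w where "w = T ind"
  have jtU: "jt \<in> U"
  proof -
    obtain j0 where "j0 \<in> U" using U(2) by auto
    show ?thesis
    proof (cases "a j0 < a jt")
      case True thus ?thesis using U(1) \<open>j0 \<in> U\<close> by blast
    next
      case False
      hence "a j0 = a jt" using jt ap by (metis linorder_not_less order_antisym)
      hence "j0 = jt" using ainj by (simp add: inj_eq)
      thus ?thesis using \<open>j0 \<in> U\<close> by simp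
    qed
  qed
  have jbU: "jb \<notin> U"
  proof
    assume "jb \<in> U"
    obtain j1 where "j1 \<notin> U" using U(3) by auto
    show False
    proof (cases "a jb < a j1")
      case True thus False using U(1) \<open>jb \<in> U\<close> \<open>j1 \<notin> U\<close> by blast
    next
      case False
      hence "a j1 = a jb" using jb ap by (metis linorder_not_less order_antisym)
      hence "j1 = jb" using ainj by (simp add: inj_eq)
      thus False using \<open>jb \<in> U\<close> \<open>j1 \<notin> U\<close> by simp
    qed
  qed
  have mono1: "w b < w c" if "a b < a c" for b c
  proof -
    have "ind b \<le> ind c" using U(1) that unfolding ind_def by auto
    hence "(1-\<eta>) * ind b \<le> (1-\<eta>) * ind c" using eta by (intro mult_left_mono) auto
    moreover have "\<eta> * a b < \<eta> * a c" using eta that by simp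
    ultimately show ?thesis unfolding w_def T_def by simp
  qed
  have so: "same_order a w" unfolding same_order_def
  proof (intro allI iffI)
    fix b c
    assume "a b < a c" thus "w b < w c" by (rule mono1)
  next
    fix b c
    assume wbc: "w b < w c"
    show "a b < a c"
    proof (rule ccontr)
      assume "\<not> a b < a c"
      hence "a c < a b \<or> a c = a b" by auto
      thus False
      proof
        assume "a c < a b" thus False using mono1[of c b] wbc by simp
      next
        assume "a c = a b" hence "c = b" using ainj by (simp add: inj_eq)
        thus False using wbc by simp
      qed
    qed
  qed
  have w01: "0 \<le> w j \<and> w j \<le> 1" for j
  proof -
    have "0 \<le> a j" "a j \<le> 1" using ap by auto
    moreover have "0 \<le> ind j" "ind j \<le> 1" by (auto simp: ind_def)
    ultimately have h: "(1-\<eta>) * ind j \<le> (1-\<eta>) * 1" "\<eta> * a j \<le> \<eta> * 1"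
       "0 \<le> (1-\<eta>) * ind j" "0 \<le> \<eta> * a j"
      using eta by (auto intro: mult_left_mono)
    have "w j = (1-\<eta>) * ind j + \<eta> * a j" unfolding w_def T_def by simp
    moreover have "(1-\<eta>) * ind j \<le> 1-\<eta>" "\<eta> * a j \<le> \<eta>" using h(1,2) by simp_all
    ultimately show ?thesis using h(3,4) by linarith
  qed
  have winj: "inj w"
  proof (rule injI)
    fix b c assume "w b = w c"
    hence "\<not> a b < a c" "\<not> a c < a b" using so unfolding same_order_def by auto
    hence "a b = a c" by simp
    thus "b = c" using ainj by (simp add: inj_eq)
  qed
  have wt: "w jt = 1" using jtU jt unfolding w_def T_def ind_def by simp
  have wb: "w jb = 0" using jbU jb unfolding w_def T_def ind_def by simp
  have wU: "w \<in> unit_range"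
  proof -
    have "Max (range w) = 1"
      by (rule Max_eqI) (use w01 wt in \<open>auto intro: range_eqI[of _ _ jt]\<close>)
    moreover have "Min (range w) = 0"
      by (rule Min_eqI) (use w01 wb in \<open>auto intro: range_eqI[of _ _ jb]\<close>)
    ultimately show ?thesis using winj by (simp add: unit_range_def)
  qed
  have wQ: "w \<in> quasi_comb \<epsilon>"
  proof -
    have "w j \<in> {0..<\<epsilon>} \<union> {1 - \<epsilon><..1}" for j
    proof (cases "j \<in> U")
      case True
      have "0 \<le> a j" using ap by auto
      hence "1 - \<eta> \<le> w j" using True eta unfolding w_def T_def ind_def by simp
      thus ?thesis using w01[of j] eta by auto
    next
      case False
      have "a j \<le> 1" using ap by auto
      hence "\<eta> * a j \<le> \<eta>" using eta by (simp add: mult_left_le)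
      hence "w j \<le> \<eta>" using False unfolding w_def T_def ind_def by simp
      thus ?thesis using w01[of j] eta by auto
    qed
    thus ?thesis using wU by (simp add: quasi_comb_def)
  qed
  have uw: "u(i:=w) \<in> profiles" using u wU unfolding profiles_def by auto
  have Jw: "J (u(i:=w)) = J u" using ord u wU so unfolding ordinal_def a_def by blast
  have Ta: "T a = a" unfolding T_def by (simp add: algebra_simps)
  have ua: "u(i:=a) = u" unfolding a_def by simp
  have "exp_welfare J (u(i:=w)) = F ind" unfolding exp_welfare_def Jw unfolding F_def w_def ..
  moreover have "opt_welfare (u(i:=w)) = G ind" unfolding G_def w_def ..
  moreover have "exp_welfare J u = F a" unfolding exp_welfare_def F_def Ta ua ..
  moreover have "opt_welfare u = G a" unfolding G_def Ta ua ..
  ultimately show ?thesis using U(4) wQ uw unfolding ind_def by auto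
qed


lemma multi:
  fixes J :: "'n::finite mechanism"
  assumes ord: "ordinal J" and u: "u \<in> profiles" and eps: "\<epsilon> > 0"
  shows "finite S \<Longrightarrow> \<exists>v\<in>profiles. (\<forall>k\<in>S. v k \<in> quasi_comb \<epsilon>) \<and>
     exp_welfare J v / opt_welfare v \<le> exp_welfare J u / opt_welfare u"
proof (induction S rule: finite_induct)
  case empty thus ?case using u by auto
next
  case (insert i S)
  then obtain v where v: "v \<in> profiles" "\<forall>k\<in>S. v k \<in> quasi_comb \<epsilon>"
    "exp_welfare J v / opt_welfare v \<le> exp_welfare J u / opt_welfare u" by blast
  obtain w where w: "w \<in> quasi_comb \<epsilon>" "v(i:=w) \<in> profiles"
    "exp_welfare J (v(i:=w)) / opt_welfare (v(i:=w)) \<le> exp_welfare J v / opt_welfare v"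
    using step[OF ord v(1) eps, of i] by blast
  have "\<forall>k\<in>insert i S. (v(i:=w)) k \<in> quasi_comb \<epsilon>" using v(2) w(1) by auto
  moreover have "exp_welfare J (v(i:=w)) / opt_welfare (v(i:=w)) \<le> exp_welfare J u / opt_welfare u"
    using v(3) w(3) by (rule order_trans[rotated])
  ultimately show ?case using w(2) by blast
qed

theorem lemma3:
  fixes J :: "'n::finite mechanism" and \<epsilon> :: real
  assumes "is_mechanism J" and "ordinal J" and "anonymous J" and "neutral J"
    and "\<epsilon> > 0"
  shows "approx_ratio J = (INF u\<in>quasi_comb_profiles \<epsilon>. exp_welfare J u / opt_welfare u)"
proof -
  let ?r = "\<lambda>u. exp_welfare J u / opt_welfare u"
  have QP: "quasi_comb_profiles \<epsilon> \<subseteq> (profiles :: ('n \<Rightarrow> 'n \<Rightarrow> real) set)"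
    unfolding quasi_comb_profiles_def profiles_def quasi_comb_def by auto
  have ex: "\<exists>v\<in>quasi_comb_profiles \<epsilon>. ?r v \<le> ?r u" if uP: "u \<in> profiles" for u
  proof -
    obtain v where "v \<in> profiles" "\<forall>k\<in>UNIV. v k \<in> quasi_comb \<epsilon>" "?r v \<le> ?r u"
      using multi[OF assms(2) uP assms(5), of UNIV] by auto
    thus ?thesis unfolding quasi_comb_profiles_def by auto
  qed
  have bddP: "bdd_below (?r ` profiles)"
    by (rule bdd_belowI[of _ 0]) (auto intro: ratio_nonneg)
  have bddQ: "bdd_below (?r ` quasi_comb_profiles \<epsilon>)"
    by (rule bdd_belowI[of _ 0]) (use QP in \<open>auto intro: ratio_nonneg\<close>)
  show ?thesis
  proof (cases "profiles = ({} :: ('n \<Rightarrow> 'n \<Rightarrow> real) set)")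
    case True
    hence "quasi_comb_profiles \<epsilon> = ({} :: ('n \<Rightarrow> 'n \<Rightarrow> real) set)" using QP by auto
    thus ?thesis using True unfolding approx_ratio_def by simp
  next
    case False
    then obtain u0 :: "'n \<Rightarrow> 'n \<Rightarrow> real" where u0: "u0 \<in> profiles" by blast
    obtain v0 :: "'n \<Rightarrow> 'n \<Rightarrow> real" where "v0 \<in> quasi_comb_profiles \<epsilon>" using ex[OF u0] by blast
    hence Qne: "quasi_comb_profiles \<epsilon> \<noteq> ({} :: ('n \<Rightarrow> 'n \<Rightarrow> real) set)" by blast
    show ?thesis unfolding approx_ratio_def
    proof (rule order_antisym)
      show "(INF u\<in>profiles. ?r u) \<le> (INF u\<in>quasi_comb_profiles \<epsilon>. ?r u)"
      proof (rule cINF_greatest[OF Qne])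
        fix v :: "'n \<Rightarrow> 'n \<Rightarrow> real" assume "v \<in> quasi_comb_profiles \<epsilon>"
        hence "v \<in> profiles" using QP by blast
        thus "(INF u\<in>profiles. ?r u) \<le> ?r v" by (rule cINF_lower[OF bddP])
      qed
      show "(INF u\<in>quasi_comb_profiles \<epsilon>. ?r u) \<le> (INF u\<in>profiles. ?r u)"
      proof (rule cINF_greatest[OF False])
        fix u :: "'n \<Rightarrow> 'n \<Rightarrow> real" assume "u \<in> profiles"
        then obtain v where v: "v \<in> quasi_comb_profiles \<epsilon>" "?r v \<le> ?r u" using ex by blast
        have "(INF u\<in>quasi_comb_profiles \<epsilon>. ?r u) \<le> ?r v"
          by (rule cINF_lower[OF bddQ v(1)])
        thus "(INF u\<in>quasi_comb_profiles \<epsilon>. ?r u) \<le> ?r u" using v(2) by linarith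
      qed
    qed
  qed
qed

end
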